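(* Let spacetime be covered by global coordinates $(x^\mu)=(x^0,x^i)$ with $x^0=ct$, equipped with a physical metric $g_{\mu\nu}$ of signature $(+,-,-,-)$ with $g_{00}>0$ everywhere, and let an arbitrarily moving, linear, isotropic, nondispersive fluid dielectric medium with index of refraction $n(x)$ and unit 4-velocity $w^\mu(x)$ (i.e. $g_{\mu\nu}w^\mu w^\nu=1$) be present. Let $\bar g^{\mu\nu}=g^{\mu\nu}+(n^2-1)w^\mu w^\nu$ be the contravariant components of Gordon's optical metric. Consider, within the geometrical optics approximation, a light ray emitted at $x_A=(x_A^0,\mathbf x_A)$ and received at $x_B=(x_B^0,\mathbf x_B)$, with wave covector $k_\mu=\partial_\mu\mathscr S$, where the eikonal $\mathscr S$ satisfies $\bar g^{\mu\nu}\partial_\mu\mathscr S\,\partial_\nu\mathscr S=0$. Let $\mathcal R_r(\mathbf x_A,x_B)=c(t_B-t_A)$ and $\mathcal R_e(x_A,\mathbf x_B)=c(t_B-t_A)$ be the reception and emission range transfer functions, which satisfy $(k_i/k_0)_A=\partial\mathcal R_r/\partial x_A^i$ and $(k_i/k_0)_B=-\partial\mathcal R_e/\partial x_B^i$. Then $$\bar g^{00}(x_B^0-\mathcal R_r,\mathbf x_A)+2\bar g^{0i}(x_B^0-\mathcal R_r,\mathbf x_A)\frac{\partial\mathcal R_r}{\partial x_A^i}+\bar g^{ij}(x_B^0-\mathcal R_r,\mathbf x_A)\frac{\partial\mathcal R_r}{\partial x_A^i}\frac{\partial\mathcal R_r}{\partial x_A^j}=0,$$ and $$\bar g^{00}(x_A^0+\mathcal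 R_e,\mathbf x_B)-2\bar g^{0i}(x_A^0+\mathcal R_e,\mathbf x_B)\frac{\partial\mathcal R_e}{\partial x_B^i}+\bar g^{ij}(x_A^0+\mathcal R_e,\mathbf x_B)\frac{\partial\mathcal R_e}{\partial x_B^i}\frac{\partial\mathcal R_e}{\partial x_B^j}=0.$$
   Context: Summation over repeated indices is used; Greek indices run over $0,\dots,3$, Latin over $1,2,3$. The light ray is assumed quasi-Minkowskian: for each spatial position $\mathbf x_A$, the past null cone (of the optical metric) at $x_B$ intersects the timelike worldline $\mathbf x=\mathbf x_A$ at exactly one point $x_A=(ct_A,\mathbf x_A)$, so that the reception time transfer function $\mathcal T_r(\mathbf x_A,t_B,\mathbf x_B)=t_B-t_A$ and emission time transfer function $\mathcal T_e(t_A,\mathbf x_A,\mathbf x_B)=t_B-t_A$ are uniquely defined; $\mathcal R_r=c\mathcal T_r$, $\mathcal R_e=c\mathcal T_e$. The notation $\bar g^{\mu\nu}(y^0,\mathbf y)$ means the component evaluated at the point event with coordinates $(y^0,\mathbf y)$. *)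

theory Defs
  imports "HOL-Analysis.Analysis"
begin

(* Coordinates: a spacetime event is a function  x :: nat => real  with x 0 = x^0 = ct
   and x 1, x 2, x 3 the spatial coordinates (other indices are irrelevant).
   A spatial position is likewise a function nat => real of which only indices 1,2,3 are used. *)

definition event :: "real \<Rightarrow> (nat \<Rightarrow> real) \<Rightarrow> (nat \<Rightarrow> real)" where
  "event y0 y = (\<lambda>\<mu>. if \<mu> = 0 then y0 else y \<mu>)"

definition coord_partial :: "((nat \<Rightarrow> real) \<Rightarrow> real) \<Rightarrow> nat \<Rightarrow> (nat \<Rightarrow> real) \<Rightarrow> real" where
  "coord_partial F \<mu> x = deriv (\<lambda>s. F (x(\<mu> := x \<mu> + s))) 0"

definition eta :: "nat \<Rightarrow> nat \<Rightarrow> real" where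
  "eta a b = (if a = b then (if a = 0 then 1 else -1) else 0)"

definition gordon ::
  "((nat \<Rightarrow> real) \<Rightarrow> nat \<Rightarrow> nat \<Rightarrow> real) \<Rightarrow> ((nat \<Rightarrow> real) \<Rightarrow> real)
   \<Rightarrow> ((nat \<Rightarrow> real) \<Rightarrow> nat \<Rightarrow> real) \<Rightarrow> (nat \<Rightarrow> real) \<Rightarrow> nat \<Rightarrow> nat \<Rightarrow> real" where
  "gordon ginv n w x \<mu> \<nu> = ginv x \<mu> \<nu> + ((n x)\<^sup>2 - 1) * w x \<mu> * w x \<nu>"

end

theory Submission
  imports Defs
begin

lemma sum4: "(\<Sum>\<mu><4. f \<mu>) = f 0 + f 1 + f 2 + (f (3::nat)::real)"
  by (simp add: eval_nat_numeral)

lemma sum13: "(\<Sum>i\<in>{1..3::nat}. f i) = f 1 + f 2 + (f 3::real)"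
proof -
  have "{1..3::nat} = {1,2,3}" by auto
  then show ?thesis by simp
qed

lemma quadA:
  fixes gb :: "nat \<Rightarrow> nat \<Rightarrow> real" and k D :: "nat \<Rightarrow> real"
  assumes sym: "\<And>a b. a < 4 \<Longrightarrow> b < 4 \<Longrightarrow> gb a b = gb b a"
    and e: "(\<Sum>\<mu><4. \<Sum>\<nu><4. gb \<mu> \<nu> * k \<mu> * k \<nu>) = 0"
    and k0: "k 0 \<noteq> 0"
    and D: "\<And>i. i \<in> {1..3} \<Longrightarrow> D i = s * (k i / k 0)"
    and s: "s * s = 1"
  shows "gb 0 0 + 2 * s * (\<Sum>i\<in>{1..3}. gb 0 i * D i)
             + (\<Sum>i\<in>{1..3}. \<Sum>j\<in>{1..3}. gb i j * D i * D j) = 0"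
proof -
  have D1: "D 1 = s * (k 1 / k 0)" "D 2 = s * (k 2 / k 0)" "D 3 = s * (k 3 / k 0)"
    using D by auto
  have sy: "gb 1 0 = gb 0 1" "gb 2 0 = gb 0 2" "gb 3 0 = gb 0 3"
     "gb 2 1 = gb 1 2" "gb 3 1 = gb 1 3" "gb 3 2 = gb 2 3" using sym by auto
  have e': "gb 0 0 * k 0 * k 0 + 2 * (gb 0 1 * k 0 * k 1 + gb 0 2 * k 0 * k 2 + gb 0 3 * k 0 * k 3)
     + (gb 1 1 * k 1 * k 1 + gb 2 2 * k 2 * k 2 + gb 3 3 * k 3 * k 3
        + 2 * (gb 1 2 * k 1 * k 2 + gb 1 3 * k 1 * k 3 + gb 2 3 * k 2 * k 3)) = 0"
    using e unfolding sum4 sy by (simp add: sy algebra_simps)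
  define q where "q i = k i / k 0" for i
  have kq: "k 1 = k 0 * q 1" "k 2 = k 0 * q 2" "k 3 = k 0 * q 3" using k0 by (auto simp: q_def)
  have "k 0 * k 0 * (gb 0 0 + 2 * (gb 0 1 * q 1 + gb 0 2 * q 2 + gb 0 3 * q 3)
     + (gb 1 1 * q 1 * q 1 + gb 2 2 * q 2 * q 2 + gb 3 3 * q 3 * q 3
        + 2 * (gb 1 2 * q 1 * q 2 + gb 1 3 * q 1 * q 3 + gb 2 3 * q 2 * q 3))) = 0"
    using e' unfolding kq by (simp add: algebra_simps)
  then have P: "gb 0 0 + 2 * (gb 0 1 * q 1 + gb 0 2 * q 2 + gb 0 3 * q 3)
     + (gb 1 1 * q 1 * q 1 + gb 2 2 * q 2 * q 2 + gb 3 3 * q 3 * q 3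
        + 2 * (gb 1 2 * q 1 * q 2 + gb 1 3 * q 1 * q 3 + gb 2 3 * q 2 * q 3)) = 0"
    using k0 by simp
  have ss: "s = 1 \<or> s = -1" using s
    by (metis minus_mult_minus mult_cancel_right1 square_eq_iff mult_1)
  show ?thesis unfolding sum13 D1 sy q_def[symmetric]
    using ss P by (elim disjE) (simp_all add: algebra_simps)
qed

theorem theorem1:
  fixes g ginv :: "(nat \<Rightarrow> real) \<Rightarrow> nat \<Rightarrow> nat \<Rightarrow> real"
    and n :: "(nat \<Rightarrow> real) \<Rightarrow> real"
    and w :: "(nat \<Rightarrow> real) \<Rightarrow> nat \<Rightarrow> real"
    and S :: "(nat \<Rightarrow> real) \<Rightarrow> real"
    and U :: "(nat \<Rightarrow> real) set"
    and Rr :: "(nat \<Rightarrow> real) \<Rightarrow> real \<Rightarrow> (nat \<Rightarrow> real) \<Rightarrow> real"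
    and Re :: "real \<Rightarrow> (nat \<Rightarrow> real) \<Rightarrow> (nat \<Rightarrow> real) \<Rightarrow> real"
    and x0A x0B :: real and xA xB :: "nat \<Rightarrow> real"
  assumes g_sym: "\<And>x \<mu> \<nu>. g x \<mu> \<nu> = g x \<nu> \<mu>"
    and g_inv: "\<And>x \<mu> \<rho>. \<mu> < 4 \<Longrightarrow> \<rho> < 4 \<Longrightarrow>
                 (\<Sum>\<nu><4. g x \<mu> \<nu> * ginv x \<nu> \<rho>) = (if \<mu> = \<rho> then 1 else 0)"
    and g_sig: "\<And>x. \<exists>L :: nat \<Rightarrow> nat \<Rightarrow> real. \<forall>a<4. \<forall>b<4.
                 (\<Sum>\<mu><4. \<Sum>\<nu><4. L \<mu> a * g x \<mu> \<nu> * L \<nu> b) = eta a b"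
    and g00: "\<And>x. g x 0 0 > 0"
    and w_unit: "\<And>x. (\<Sum>\<mu><4. \<Sum>\<nu><4. g x \<mu> \<nu> * w x \<mu> * w x \<nu>) = 1"
    and U_open: "open U"
    and A_in: "event x0A xA \<in> U" and B_in: "event x0B xB \<in> U"
    and S_diff: "\<And>x \<mu>. x \<in> U \<Longrightarrow> \<mu> < 4 \<Longrightarrow>
                 (\<lambda>s. S (x(\<mu> := x \<mu> + s))) differentiable (at 0)"
    and eikonal: "\<And>x. x \<in> U \<Longrightarrow>
                 (\<Sum>\<mu><4. \<Sum>\<nu><4. gordon ginv n w x \<mu> \<nu> * coord_partial S \<mu> x * coord_partial S \<nu> x) = 0"
    and k0A: "coord_partial S 0 (event x0A xA) \<noteq> 0"
    and k0B: "coord_partial S 0 (event x0B xB) \<noteq> 0"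
    and tA: "x0A = x0B - Rr xA x0B xB"
    and tB: "x0B = x0A + Re x0A xA xB"
    and dRr: "\<And>i. i \<in> {1..3} \<Longrightarrow>
                 ((\<lambda>s. Rr (xA(i := xA i + s)) x0B xB) has_real_derivative
                   (coord_partial S i (event x0A xA) / coord_partial S 0 (event x0A xA))) (at 0)"
    and dRe: "\<And>i. i \<in> {1..3} \<Longrightarrow>
                 ((\<lambda>s. Re x0A xA (xB(i := xB i + s))) has_real_derivative
                   - (coord_partial S i (event x0B xB) / coord_partial S 0 (event x0B xB))) (at 0)"
  shows "(let gb = gordon ginv n w (event (x0B - Rr xA x0B xB) xA);
              D = (\<lambda>i. coord_partial (\<lambda>y. Rr y x0B xB) i xA)
          in gb 0 0 + 2 * (\<Sum>i\<in>{1..3}. gb 0 i * D i)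
             + (\<Sum>i\<in>{1..3}. \<Sum>j\<in>{1..3}. gb i j * D i * D j) = 0)
       \<and> (let gb = gordon ginv n w (event (x0A + Re x0A xA xB) xB);
              D = (\<lambda>i. coord_partial (\<lambda>y. Re x0A xA y) i xB)
          in gb 0 0 - 2 * (\<Sum>i\<in>{1..3}. gb 0 i * D i)
             + (\<Sum>i\<in>{1..3}. \<Sum>j\<in>{1..3}. gb i j * D i * D j) = 0)"
proof -
  have ginv_sym: "ginv x a b = ginv x b a" if "a < 4" "b < 4" for x a b
  proof -
    have "ginv x b a = (\<Sum>\<nu><4. (if \<nu> = b then ginv x \<nu> a else 0))"
      using that by (simp add: sum.delta)
    also have "\<dots> = (\<Sum>\<nu><4. (\<Sum>\<mu><4. ginv x \<mu> b * g x \<mu> \<nu>) * ginv x \<nu> a)"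
    proof (rule sum.cong[OF refl])
      fix \<nu> assume "\<nu> \<in> {..<4::nat}"
      then have "(\<Sum>\<mu><4. ginv x \<mu> b * g x \<mu> \<nu>) = (if \<nu> = b then 1 else 0)"
        using g_inv[of \<nu> b x] that by (simp add: g_sym mult.commute)
      then show "(if \<nu> = b then ginv x \<nu> a else 0) = (\<Sum>\<mu><4. ginv x \<mu> b * g x \<mu> \<nu>) * ginv x \<nu> a"
        by simp
    qed
    also have "\<dots> = (\<Sum>\<mu><4. ginv x \<mu> b * (\<Sum>\<nu><4. g x \<mu> \<nu> * ginv x \<nu> a))"
      unfolding sum_distrib_right sum_distrib_left mult.assoc by (rule sum.swap)
    also have "\<dots> = (\<Sum>\<mu><4. (if \<mu> = a then ginv x \<mu> b else 0))"
      by (rule sum.cong[OF refl]) (simp add: g_inv that)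
    also have "\<dots> = ginv x a b" using that by (simp add: sum.delta)
    finally show ?thesis by simp
  qed
  have gsym: "gordon ginv n w x a b = gordon ginv n w x b a" if "a < 4" "b < 4" for x a b
    using ginv_sym[OF that] by (simp add: gordon_def)
  define kA where "kA \<mu> = coord_partial S \<mu> (event x0A xA)" for \<mu>
  define kB where "kB \<mu> = coord_partial S \<mu> (event x0B xB)" for \<mu>
  have DA: "coord_partial (\<lambda>y. Rr y x0B xB) i xA = 1 * (kA i / kA 0)" if "i \<in> {1..3}" for i
    using DERIV_imp_deriv[OF dRr[OF that]] unfolding coord_partial_def kA_def by simp
  have DB: "coord_partial (\<lambda>y. Re x0A xA y) i xB = (-1) * (kB i / kB 0)" if "i \<in> {1..3}" for i
    using DERIV_imp_deriv[OF dRe[OF that]] unfolding coord_partial_def kB_def by simp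
  have eA: "(\<Sum>\<mu><4. \<Sum>\<nu><4. gordon ginv n w (event x0A xA) \<mu> \<nu> * kA \<mu> * kA \<nu>) = 0"
    using eikonal[OF A_in] unfolding kA_def .
  have eB: "(\<Sum>\<mu><4. \<Sum>\<nu><4. gordon ginv n w (event x0B xB) \<mu> \<nu> * kB \<mu> * kB \<nu>) = 0"
    using eikonal[OF B_in] unfolding kB_def .
  have 1: "gordon ginv n w (event x0A xA) 0 0 + 2 * 1 * (\<Sum>i\<in>{1..3}. gordon ginv n w (event x0A xA) 0 i * coord_partial (\<lambda>y. Rr y x0B xB) i xA)
             + (\<Sum>i\<in>{1..3}. \<Sum>j\<in>{1..3}. gordon ginv n w (event x0A xA) i j * coord_partial (\<lambda>y. Rr y x0B xB) i xA * coord_partial (\<lambda>y. Rr y x0B xB) j xA) = 0"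
    by (rule quadA[OF gsym eA _ DA]) (use k0A kA_def in auto)
  have 2: "gordon ginv n w (event x0B xB) 0 0 + 2 * (-1) * (\<Sum>i\<in>{1..3}. gordon ginv n w (event x0B xB) 0 i * coord_partial (\<lambda>y. Re x0A xA y) i xB)
             + (\<Sum>i\<in>{1..3}. \<Sum>j\<in>{1..3}. gordon ginv n w (event x0B xB) i j * coord_partial (\<lambda>y. Re x0A xA y) i xB * coord_partial (\<lambda>y. Re x0A xA y) j xB) = 0"
    by (rule quadA[OF gsym eB _ DB]) (use k0B kB_def in auto)
  show ?thesis using 1 2 tA[symmetric] tB[symmetric] by (simp add: Let_def)
qed

end
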